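(* Let $2\le m\le n$. Then $\mathcal{P}(\mathrm{K}_{m,n})=\mathcal{AM}(\mathrm{K}_{m,n})$.
   Context: $\mathrm{K}_{m,n}$ is the poset $\{x_1,\dots,x_m,y_1,\dots,y_n\}$ with $x_i<y_j$ for all $i,j$ and no other relations between distinct elements. For a finite connected poset $X$ and $x<y$, $e_{xy}$ denotes the incidence-algebra basis element, and $B=\{e_{xy}:x<y\}$. $\mathcal{C}(X)$ is the set of maximal chains. For a bijection $\theta:B\to B$ and $C:u_1<\dots<u_k$ in $\mathcal{C}(X)$, $\theta$ is increasing on $C$ if there is $D:v_1<\dots<v_k$ in $\mathcal{C}(X)$ with $\theta(e_{u_iu_j})=e_{v_iv_j}$ for all $i<j$, decreasing if $\theta(e_{u_iu_j})=e_{v_{k-j+1}v_{k-i+1}}$ for all $i<j$. $\mathcal{M}(X)$: bijections $B\to B$ increasing or decreasing on every maximal chain. A walk is a sequence $u_0,\dots,u_r$ where for each $i$ one of $u_i,u_{i+1}$ covers the other; closed if $u_0=u_r$. For a closed walk $\Gamma:u_0,\dots,u_r=u_0$ and $z\in X$: $s^+_{\theta,\Gamma}(z)=|\{i: u_i<u_{i+1},\ \exists w>z,\ \theta(e_{zw})=e_{u_iu_{i+1}}\}|$, $s^-_{\theta,\Gamma}(z)=|\{i: u_i>u_{i+1},\ \exists w>z,\ \theta(e_{zw})=e_{u_{i+1}u_i}\}|$, $t^+_{\theta,\Gamma}(z)=|\{i: u_i<u_{i+1},\ \exists w<z,\ \theta(e_{wz})=e_{u_iu_{i+1}}\}|$,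 $t^-_{\theta,\Gamma}(z)=|\{i: u_i>u_{i+1},\ \exists w<z,\ \theta(e_{wz})=e_{u_{i+1}u_i}\}|$, $0\le i\le r-1$. $\theta$ is admissible if $s^+-s^-=t^+-t^-$ at every $z$ for every closed walk; $\mathcal{AM}(X)$ is the set of admissible elements of $\mathcal{M}(X)$. $\theta:B\to B$ is proper if there is an automorphism $\lambda$ of $X$ with $\theta(e_{xy})=e_{\lambda(x)\lambda(y)}$ for all $x<y$, or an anti-automorphism $\lambda$ with $\theta(e_{xy})=e_{\lambda(y)\lambda(x)}$ for all $x<y$; $\mathcal{P}(X)$ is the set of proper bijections. *)

theory Defs
  imports Main
begin

text \<open>A finite poset is given by a carrier X and a strict order lt.
  The incidence-algebra basis element e_xy (x < y) is represented by the pair (x,y);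
  B is the set of such pairs.\<close>

definition basis :: "'a set \<Rightarrow> ('a \<Rightarrow> 'a \<Rightarrow> bool) \<Rightarrow> ('a \<times> 'a) set" where
  "basis X lt = {(x, y). x \<in> X \<and> y \<in> X \<and> lt x y}"

definition is_chain :: "'a set \<Rightarrow> ('a \<Rightarrow> 'a \<Rightarrow> bool) \<Rightarrow> 'a list \<Rightarrow> bool" where
  "is_chain X lt us \<longleftrightarrow> set us \<subseteq> X \<and> sorted_wrt lt us"

definition max_chain :: "'a set \<Rightarrow> ('a \<Rightarrow> 'a \<Rightarrow> bool) \<Rightarrow> 'a list \<Rightarrow> bool" where
  "max_chain X lt us \<longleftrightarrow> is_chain X lt us \<and>
     (\<forall>vs. is_chain X lt vs \<and> set us \<subseteq> set vs \<longrightarrow> set vs = set us)"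

definition increasing_on ::
  "'a set \<Rightarrow> ('a \<Rightarrow> 'a \<Rightarrow> bool) \<Rightarrow> ('a \<times> 'a \<Rightarrow> 'a \<times> 'a) \<Rightarrow> 'a list \<Rightarrow> bool" where
  "increasing_on X lt \<theta> us \<longleftrightarrow> (\<exists>vs. max_chain X lt vs \<and> length vs = length us \<and>
     (\<forall>i j. i < j \<and> j < length us \<longrightarrow> \<theta> (us ! i, us ! j) = (vs ! i, vs ! j)))"

definition decreasing_on ::
  "'a set \<Rightarrow> ('a \<Rightarrow> 'a \<Rightarrow> bool) \<Rightarrow> ('a \<times> 'a \<Rightarrow> 'a \<times> 'a) \<Rightarrow> 'a list \<Rightarrow> bool" where
  "decreasing_on X lt \<theta> us \<longleftrightarrow> (\<exists>vs. max_chain X lt vs \<and> length vs = length us \<and>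
     (\<forall>i j. i < j \<and> j < length us \<longrightarrow>
        \<theta> (us ! i, us ! j) = (vs ! (length us - 1 - j), vs ! (length us - 1 - i))))"

definition in_M :: "'a set \<Rightarrow> ('a \<Rightarrow> 'a \<Rightarrow> bool) \<Rightarrow> ('a \<times> 'a \<Rightarrow> 'a \<times> 'a) \<Rightarrow> bool" where
  "in_M X lt \<theta> \<longleftrightarrow> bij_betw \<theta> (basis X lt) (basis X lt) \<and>
     (\<forall>us. max_chain X lt us \<longrightarrow> increasing_on X lt \<theta> us \<or> decreasing_on X lt \<theta> us)"

definition covers :: "'a set \<Rightarrow> ('a \<Rightarrow> 'a \<Rightarrow> bool) \<Rightarrow> 'a \<Rightarrow> 'a \<Rightarrow> bool" where
  "covers X lt a b \<longleftrightarrow> a \<in> X \<and> b \<in> X \<and> lt a b \<and> \<not> (\<exists>c\<in>X. lt a c \<and> lt c b)"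

definition is_walk :: "'a set \<Rightarrow> ('a \<Rightarrow> 'a \<Rightarrow> bool) \<Rightarrow> 'a list \<Rightarrow> bool" where
  "is_walk X lt us \<longleftrightarrow> us \<noteq> [] \<and> set us \<subseteq> X \<and>
     (\<forall>i. Suc i < length us \<longrightarrow> covers X lt (us ! i) (us ! Suc i) \<or> covers X lt (us ! Suc i) (us ! i))"

definition closed_walk :: "'a set \<Rightarrow> ('a \<Rightarrow> 'a \<Rightarrow> bool) \<Rightarrow> 'a list \<Rightarrow> bool" where
  "closed_walk X lt us \<longleftrightarrow> is_walk X lt us \<and> hd us = last us"

definition s_plus where
  "s_plus X lt \<theta> us z = card {i. Suc i < length us \<and> lt (us ! i) (us ! Suc i) \<and>
      (\<exists>w\<in>X. lt z w \<and> \<theta> (z, w) = (us ! i, us ! Suc i))}"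

definition s_minus where
  "s_minus X lt \<theta> us z = card {i. Suc i < length us \<and> lt (us ! Suc i) (us ! i) \<and>
      (\<exists>w\<in>X. lt z w \<and> \<theta> (z, w) = (us ! Suc i, us ! i))}"

definition t_plus where
  "t_plus X lt \<theta> us z = card {i. Suc i < length us \<and> lt (us ! i) (us ! Suc i) \<and>
      (\<exists>w\<in>X. lt w z \<and> \<theta> (w, z) = (us ! i, us ! Suc i))}"

definition t_minus where
  "t_minus X lt \<theta> us z = card {i. Suc i < length us \<and> lt (us ! Suc i) (us ! i) \<and>
      (\<exists>w\<in>X. lt w z \<and> \<theta> (w, z) = (us ! Suc i, us ! i))}"

definition admissible :: "'a set \<Rightarrow> ('a \<Rightarrow> 'a \<Rightarrow> bool) \<Rightarrow> ('a \<times> 'a \<Rightarrow> 'a \<times> 'a) \<Rightarrow> bool" where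
  "admissible X lt \<theta> \<longleftrightarrow> (\<forall>us z. closed_walk X lt us \<and> z \<in> X \<longrightarrow>
     int (s_plus X lt \<theta> us z) - int (s_minus X lt \<theta> us z) =
     int (t_plus X lt \<theta> us z) - int (t_minus X lt \<theta> us z))"

definition in_AM :: "'a set \<Rightarrow> ('a \<Rightarrow> 'a \<Rightarrow> bool) \<Rightarrow> ('a \<times> 'a \<Rightarrow> 'a \<times> 'a) \<Rightarrow> bool" where
  "in_AM X lt \<theta> \<longleftrightarrow> in_M X lt \<theta> \<and> admissible X lt \<theta>"

definition is_automorphism :: "'a set \<Rightarrow> ('a \<Rightarrow> 'a \<Rightarrow> bool) \<Rightarrow> ('a \<Rightarrow> 'a) \<Rightarrow> bool" where
  "is_automorphism X lt f \<longleftrightarrow> bij_betw f X X \<and> (\<forall>x\<in>X. \<forall>y\<in>X. lt x y \<longleftrightarrow> lt (f x) (f y))"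

definition is_antiautomorphism :: "'a set \<Rightarrow> ('a \<Rightarrow> 'a \<Rightarrow> bool) \<Rightarrow> ('a \<Rightarrow> 'a) \<Rightarrow> bool" where
  "is_antiautomorphism X lt f \<longleftrightarrow> bij_betw f X X \<and> (\<forall>x\<in>X. \<forall>y\<in>X. lt x y \<longleftrightarrow> lt (f y) (f x))"

definition in_P :: "'a set \<Rightarrow> ('a \<Rightarrow> 'a \<Rightarrow> bool) \<Rightarrow> ('a \<times> 'a \<Rightarrow> 'a \<times> 'a) \<Rightarrow> bool" where
  "in_P X lt \<theta> \<longleftrightarrow> bij_betw \<theta> (basis X lt) (basis X lt) \<and>
     ((\<exists>f. is_automorphism X lt f \<and> (\<forall>(x, y)\<in>basis X lt. \<theta> (x, y) = (f x, f y))) \<or>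
      (\<exists>f. is_antiautomorphism X lt f \<and> (\<forall>(x, y)\<in>basis X lt. \<theta> (x, y) = (f y, f x))))"

text \<open>K_{m,n}: x_i = Inl i (i < m), y_j = Inr j (j < n), x_i < y_j.\<close>
definition K_set :: "nat \<Rightarrow> nat \<Rightarrow> (nat + nat) set" where
  "K_set m n = Inl ` {..<m} \<union> Inr ` {..<n}"

definition K_lt :: "nat \<Rightarrow> nat \<Rightarrow> (nat + nat) \<Rightarrow> (nat + nat) \<Rightarrow> bool" where
  "K_lt m n a b \<longleftrightarrow> (\<exists>i j. i < m \<and> j < n \<and> a = Inl i \<and> b = Inr j)"

end

theory Submission
  imports Defs
begin


lemma K_lt_iff: "K_lt m n a b \<longleftrightarrow> (\<exists>i j. i < m \<and> j < n \<and> a = Inl i \<and> b = Inr j)"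
  by (simp add: K_lt_def)

lemma K_lt_in: "K_lt m n a b \<Longrightarrow> a \<in> K_set m n \<and> b \<in> K_set m n"
  by (auto simp: K_lt_def K_set_def)

lemma basis_K: "(p, q) \<in> basis (K_set m n) (K_lt m n) \<longleftrightarrow> K_lt m n p q"
  using K_lt_in by (auto simp: basis_def)

lemma covers_K: "covers (K_set m n) (K_lt m n) a b \<longleftrightarrow> K_lt m n a b"
  using K_lt_in[of m n a b] by (auto simp: covers_def K_lt_def)

lemma walk_count:
  assumes "us \<noteq> []" "hd us = last us"
  shows "card {t. Suc t < length us \<and> us ! t = v} = card {t. Suc t < length us \<and> us ! Suc t = v}"
proof -
  have e1: "{t. Suc t < length us \<and> us ! t = v} = {t. t < length (butlast us) \<and> (\<lambda>x. x = v) (butlast us ! t)}"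
    by (auto simp: nth_butlast)
  have e2: "{t. Suc t < length us \<and> us ! Suc t = v} = {t. t < length (tl us) \<and> (\<lambda>x. x = v) (tl us ! t)}"
    by (auto simp: nth_tl)
  have a: "us = butlast us @ [last us]" using assms by simp
  have b: "us = hd us # tl us" using assms(1) by simp
  have "length (filter (\<lambda>x. x = v) us) = length (filter (\<lambda>x. x = v) (butlast us)) + (if last us = v then 1 else 0)"
    by (subst a) simp
  moreover have "length (filter (\<lambda>x. x = v) us) = length (filter (\<lambda>x. x = v) (tl us)) + (if hd us = v then 1 else 0)"
    by (subst b) simp
  ultimately have "length (filter (\<lambda>x. x = v) (butlast us)) = length (filter (\<lambda>x. x = v) (tl us))"
    using assms(2) by simp
  then show ?thesis unfolding e1 e2 length_filter_conv_card by simp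
qed

lemma card_less_Suc: "card {t. t < Suc k \<and> P t} = card {t. t < k \<and> P t} + (if P k then 1 else 0)"
proof -
  have "{t. t < Suc k \<and> P t} = {t. t < k \<and> P t} \<union> (if P k then {k} else {})"
    by (auto simp: less_Suc_eq)
  then show ?thesis by (simp add: card_Un_disjoint)
qed

lemma card_walk5: "card {t. Suc t < length [x0,x1,x2,x3,x4::'a] \<and> Q t} =
   (if Q 0 then 1 else 0) + (if Q (Suc 0) then 1 else 0) + (if Q (Suc (Suc 0)) then 1 else 0) + (if Q (Suc (Suc (Suc 0))) then 1 else 0)"
proof -
  have "{t. Suc t < length [x0,x1,x2,x3,x4::'a] \<and> Q t} = {t. t < Suc (Suc (Suc (Suc 0))) \<and> Q t}" by auto
  then show ?thesis by (simp only: card_less_Suc) simp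
qed



lemma sorted_K_len: "sorted_wrt (K_lt m n) vs \<Longrightarrow> length vs \<le> 2"
  by (cases vs rule: remdups_adj.cases; cases "drop 2 vs"; auto simp: K_lt_def)

lemma max_chain_K:
  assumes "0 < m" "0 < n" "max_chain (K_set m n) (K_lt m n) us"
  shows "\<exists>i j. i < m \<and> j < n \<and> us = [Inl i, Inr j]"
proof -
  have ch: "set us \<subseteq> K_set m n" "sorted_wrt (K_lt m n) us" and mx: "\<And>vs. is_chain (K_set m n) (K_lt m n) vs \<Longrightarrow> set us \<subseteq> set vs \<Longrightarrow> set vs = set us"
    using assms(3) by (auto simp: max_chain_def is_chain_def)
  have pc: "\<And>i j. i < m \<Longrightarrow> j < n \<Longrightarrow> is_chain (K_set m n) (K_lt m n) [Inl i, Inr j]"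
    by (auto simp: is_chain_def K_set_def K_lt_def)
  show ?thesis
  proof (cases us rule: remdups_adj.cases)
    case 1
    then show ?thesis using mx[OF pc[OF assms(1,2)]] by simp
  next
    case (2 x)
    then show ?thesis
    proof (cases x)
      case (Inl i)
      then have "i < m" using ch 2 by (auto simp: K_set_def)
      then show ?thesis using mx[OF pc[OF \<open>i < m\<close> assms(2)]] 2 Inl by auto
    next
      case (Inr j)
      then have "j < n" using ch 2 by (auto simp: K_set_def)
      then show ?thesis using mx[OF pc[OF assms(1) \<open>j < n\<close>]] 2 Inr by auto
    qed
  next
    case (3 x y xs)
    then have "xs = []" using sorted_K_len[OF ch(2)] by simp
    then show ?thesis using 3 ch(2) by (auto simp: K_lt_def)
  qed
qed

lemma max_chain_pair:
  assumes "i < m" "j < n"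
  shows "max_chain (K_set m n) (K_lt m n) [Inl i, Inr j]"
  unfolding max_chain_def
proof (intro conjI allI impI)
  show "is_chain (K_set m n) (K_lt m n) [Inl i, Inr j]"
    using assms by (auto simp: is_chain_def K_set_def K_lt_def)
  fix vs assume a: "is_chain (K_set m n) (K_lt m n) vs \<and> set [Inl i, Inr j] \<subseteq> set vs"
  have "length vs \<le> 2" using a sorted_K_len by (auto simp: is_chain_def)
  then have "card (set vs) \<le> card (set [Inl i, Inr j :: nat + nat])"
    using card_length[of vs] by simp
  then show "set vs = set [Inl i, Inr j]"
    using a card_seteq[of "set vs" "set [Inl i, Inr j]"] by auto
qed

lemma in_M_K:
  assumes "0 < m" "0 < n" "bij_betw \<theta> (basis (K_set m n) (K_lt m n)) (basis (K_set m n) (K_lt m n))"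
  shows "in_M (K_set m n) (K_lt m n) \<theta>"
  unfolding in_M_def
proof (intro conjI allI impI)
  show "bij_betw \<theta> (basis (K_set m n) (K_lt m n)) (basis (K_set m n) (K_lt m n))" by fact
  fix us assume "max_chain (K_set m n) (K_lt m n) us"
  then obtain i j where ij: "i < m" "j < n" "us = [Inl i, Inr j]" using max_chain_K assms by blast
  then have "(Inl i, Inr j) \<in> basis (K_set m n) (K_lt m n)" by (simp add: basis_K K_lt_def)
  then have "\<theta> (Inl i, Inr j) \<in> basis (K_set m n) (K_lt m n)" using assms(3) bij_betwE by blast
  then obtain c d where cd: "c < m" "d < n" "\<theta> (Inl i, Inr j) = (Inl c, Inr d)"
    by (cases "\<theta> (Inl i, Inr j)") (auto simp: basis_K K_lt_def)
  have "increasing_on (K_set m n) (K_lt m n) \<theta> us"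
    unfolding increasing_on_def
  proof (intro exI conjI allI impI)
    show "max_chain (K_set m n) (K_lt m n) [Inl c, Inr d]" using max_chain_pair cd by simp
    show "length [Inl c, Inr d] = length us" using ij by simp
    fix a b assume "a < b \<and> b < length us"
    then have "a = 0" "b = 1" using ij by auto
    then show "\<theta> (us ! a, us ! b) = ([Inl c, Inr d] ! a, [Inl c, Inr d] ! b)" using ij cd by simp
  qed
  then show "increasing_on (K_set m n) (K_lt m n) \<theta> us \<or> decreasing_on (K_set m n) (K_lt m n) \<theta> us" ..
qed



lemma walk_step:
  assumes "is_walk X lt us" "Suc t < length us"
  shows "us ! t \<in> X \<and> us ! Suc t \<in> X \<and> (lt (us ! t) (us ! Suc t) \<or> lt (us ! Suc t) (us ! t))"
  using assms unfolding is_walk_def covers_def by blast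

lemma aut_pre:
  assumes "is_automorphism X lt f" "y \<in> X"
  obtains w where "w \<in> X" "f w = y"
proof -
  have "y \<in> f ` X" using assms unfolding is_automorphism_def bij_betw_def by simp
  then show thesis using that by blast
qed

lemma anti_pre:
  assumes "is_antiautomorphism X lt f" "y \<in> X"
  obtains w where "w \<in> X" "f w = y"
proof -
  have "y \<in> f ` X" using assms unfolding is_antiautomorphism_def bij_betw_def by simp
  then show thesis using that by blast
qed

context
  fixes X :: "'a set" and lt :: "'a \<Rightarrow> 'a \<Rightarrow> bool" and f :: "'a \<Rightarrow> 'a" and \<theta> :: "'a \<times> 'a \<Rightarrow> 'a \<times> 'a" and us :: "'a list" and z :: 'a
  assumes walk: "is_walk X lt us" and zX: "z \<in> X"
begin

context
  assumes aut: "is_automorphism X lt f"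
    and th: "\<forall>(x, y)\<in>basis X lt. \<theta> (x, y) = (f x, f y)"
begin

lemma th': "x \<in> X \<Longrightarrow> y \<in> X \<Longrightarrow> lt x y \<Longrightarrow> \<theta> (x, y) = (f x, f y)"
  using th by (auto simp: basis_def)

lemma fX: "x \<in> X \<Longrightarrow> f x \<in> X"
  using aut unfolding is_automorphism_def bij_betw_def by auto

lemma flt: "x \<in> X \<Longrightarrow> y \<in> X \<Longrightarrow> lt (f x) (f y) \<longleftrightarrow> lt x y"
  using aut unfolding is_automorphism_def by blast

lemma aut_sp:
  assumes nb: "\<forall>w\<in>X. \<not> lt w z"
  shows "{t. Suc t < length us \<and> lt (us ! t) (us ! Suc t) \<and> (\<exists>w\<in>X. lt z w \<and> \<theta> (z, w) = (us ! t, us ! Suc t))}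
       = {t. Suc t < length us \<and> us ! t = f z}"
proof (intro equalityI subsetI)
  fix t assume "t \<in> {t. Suc t < length us \<and> lt (us ! t) (us ! Suc t) \<and> (\<exists>w\<in>X. lt z w \<and> \<theta> (z, w) = (us ! t, us ! Suc t))}"
  then show "t \<in> {t. Suc t < length us \<and> us ! t = f z}" using th' zX by auto
next
  fix t assume "t \<in> {t. Suc t < length us \<and> us ! t = f z}"
  then have t: "Suc t < length us" "us ! t = f z" by auto
  note s = walk_step[OF walk t(1)]
  obtain w where w: "w \<in> X" "f w = us ! Suc t" using aut_pre[OF aut] s by blast
  have "\<not> lt (us ! Suc t) (us ! t)" using nb flt[OF w(1) zX] flt[OF zX w(1)] w zX t(2) by auto
  then have R: "lt (us ! t) (us ! Suc t)" using s by blast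
  then have L: "lt z w" using flt[OF w(1) zX] flt[OF zX w(1)] w zX t(2) by auto
  have E: "\<theta> (z, w) = (f z, f w)" using th'[OF zX w(1) L] .
  show "t \<in> {t. Suc t < length us \<and> lt (us ! t) (us ! Suc t) \<and> (\<exists>w\<in>X. lt z w \<and> \<theta> (z, w) = (us ! t, us ! Suc t))}"
    using t w L R E by auto
qed

lemma aut_sm:
  assumes nb: "\<forall>w\<in>X. \<not> lt w z"
  shows "{t. Suc t < length us \<and> lt (us ! Suc t) (us ! t) \<and> (\<exists>w\<in>X. lt z w \<and> \<theta> (z, w) = (us ! Suc t, us ! t))}
       = {t. Suc t < length us \<and> us ! Suc t = f z}"
proof (intro equalityI subsetI)
  fix t assume "t \<in> {t. Suc t < length us \<and> lt (us ! Suc t) (us ! t) \<and> (\<exists>w\<in>X. lt z w \<and> \<theta> (z, w) = (us ! Suc t, us ! t))}"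
  then show "t \<in> {t. Suc t < length us \<and> us ! Suc t = f z}" using th' zX by auto
next
  fix t assume "t \<in> {t. Suc t < length us \<and> us ! Suc t = f z}"
  then have t: "Suc t < length us" "us ! Suc t = f z" by auto
  note s = walk_step[OF walk t(1)]
  obtain w where w: "w \<in> X" "f w = us ! t" using aut_pre[OF aut] s by blast
  have "\<not> lt (us ! t) (us ! Suc t)" using nb flt[OF w(1) zX] flt[OF zX w(1)] w zX t(2) by auto
  then have R: "lt (us ! Suc t) (us ! t)" using s by blast
  then have L: "lt z w" using flt[OF w(1) zX] flt[OF zX w(1)] w zX t(2) by auto
  have E: "\<theta> (z, w) = (f z, f w)" using th'[OF zX w(1) L] .
  show "t \<in> {t. Suc t < length us \<and> lt (us ! Suc t) (us ! t) \<and> (\<exists>w\<in>X. lt z w \<and> \<theta> (z, w) = (us ! Suc t, us ! t))}"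
    using t w L R E by auto
qed

lemma aut_tp:
  assumes na: "\<forall>w\<in>X. \<not> lt z w"
  shows "{t. Suc t < length us \<and> lt (us ! t) (us ! Suc t) \<and> (\<exists>w\<in>X. lt w z \<and> \<theta> (w, z) = (us ! t, us ! Suc t))}
       = {t. Suc t < length us \<and> us ! Suc t = f z}"
proof (intro equalityI subsetI)
  fix t assume "t \<in> {t. Suc t < length us \<and> lt (us ! t) (us ! Suc t) \<and> (\<exists>w\<in>X. lt w z \<and> \<theta> (w, z) = (us ! t, us ! Suc t))}"
  then show "t \<in> {t. Suc t < length us \<and> us ! Suc t = f z}" using th' zX by auto
next
  fix t assume "t \<in> {t. Suc t < length us \<and> us ! Suc t = f z}"
  then have t: "Suc t < length us" "us ! Suc t = f z" by auto
  note s = walk_step[OF walk t(1)]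
  obtain w where w: "w \<in> X" "f w = us ! t" using aut_pre[OF aut] s by blast
  have "\<not> lt (us ! Suc t) (us ! t)" using na flt[OF w(1) zX] flt[OF zX w(1)] w zX t(2) by auto
  then have R: "lt (us ! t) (us ! Suc t)" using s by blast
  then have L: "lt w z" using flt[OF w(1) zX] flt[OF zX w(1)] w zX t(2) by auto
  have E: "\<theta> (w, z) = (f w, f z)" using th'[OF w(1) zX L] .
  show "t \<in> {t. Suc t < length us \<and> lt (us ! t) (us ! Suc t) \<and> (\<exists>w\<in>X. lt w z \<and> \<theta> (w, z) = (us ! t, us ! Suc t))}"
    using t w L R E by auto
qed

lemma aut_tm:
  assumes na: "\<forall>w\<in>X. \<not> lt z w"
  shows "{t. Suc t < length us \<and> lt (us ! Suc t) (us ! t) \<and> (\<exists>w\<in>X. lt w z \<and> \<theta> (w, z) = (us ! Suc t, us ! t))}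
       = {t. Suc t < length us \<and> us ! t = f z}"
proof (intro equalityI subsetI)
  fix t assume "t \<in> {t. Suc t < length us \<and> lt (us ! Suc t) (us ! t) \<and> (\<exists>w\<in>X. lt w z \<and> \<theta> (w, z) = (us ! Suc t, us ! t))}"
  then show "t \<in> {t. Suc t < length us \<and> us ! t = f z}" using th' zX by auto
next
  fix t assume "t \<in> {t. Suc t < length us \<and> us ! t = f z}"
  then have t: "Suc t < length us" "us ! t = f z" by auto
  note s = walk_step[OF walk t(1)]
  obtain w where w: "w \<in> X" "f w = us ! Suc t" using aut_pre[OF aut] s by blast
  have "\<not> lt (us ! t) (us ! Suc t)" using na flt[OF w(1) zX] flt[OF zX w(1)] w zX t(2) by auto
  then have R: "lt (us ! Suc t) (us ! t)" using s by blast
  then have L: "lt w z" using flt[OF w(1) zX] flt[OF zX w(1)] w zX t(2) by auto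
  have E: "\<theta> (w, z) = (f w, f z)" using th'[OF w(1) zX L] .
  show "t \<in> {t. Suc t < length us \<and> lt (us ! Suc t) (us ! t) \<and> (\<exists>w\<in>X. lt w z \<and> \<theta> (w, z) = (us ! Suc t, us ! t))}"
    using t w L R E by auto
qed

end

context
  assumes aut: "is_antiautomorphism X lt f"
    and th: "\<forall>(x, y)\<in>basis X lt. \<theta> (x, y) = (f y, f x)"
begin

lemma th'': "x \<in> X \<Longrightarrow> y \<in> X \<Longrightarrow> lt x y \<Longrightarrow> \<theta> (x, y) = (f y, f x)"
  using th by (auto simp: basis_def)

lemma flt': "x \<in> X \<Longrightarrow> y \<in> X \<Longrightarrow> lt (f y) (f x) \<longleftrightarrow> lt x y"
  using aut unfolding is_antiautomorphism_def by blast

lemma anti_sp: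
  assumes nb: "\<forall>w\<in>X. \<not> lt w z"
  shows "{t. Suc t < length us \<and> lt (us ! t) (us ! Suc t) \<and> (\<exists>w\<in>X. lt z w \<and> \<theta> (z, w) = (us ! t, us ! Suc t))}
       = {t. Suc t < length us \<and> us ! Suc t = f z}"
proof (intro equalityI subsetI)
  fix t assume "t \<in> {t. Suc t < length us \<and> lt (us ! t) (us ! Suc t) \<and> (\<exists>w\<in>X. lt z w \<and> \<theta> (z, w) = (us ! t, us ! Suc t))}"
  then show "t \<in> {t. Suc t < length us \<and> us ! Suc t = f z}" using th'' zX by auto
next
  fix t assume "t \<in> {t. Suc t < length us \<and> us ! Suc t = f z}"
  then have t: "Suc t < length us" "us ! Suc t = f z" by auto
  note s = walk_step[OF walk t(1)]
  obtain w where w: "w \<in> X" "f w = us ! t" using anti_pre[OF aut] s by blast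
  have "\<not> lt (us ! Suc t) (us ! t)" using nb flt'[OF w(1) zX] flt'[OF zX w(1)] w zX t(2) by auto
  then have R: "lt (us ! t) (us ! Suc t)" using s by blast
  then have L: "lt z w" using flt'[OF w(1) zX] flt'[OF zX w(1)] w zX t(2) by auto
  have E: "\<theta> (z, w) = (f w, f z)" using th''[OF zX w(1) L] .
  show "t \<in> {t. Suc t < length us \<and> lt (us ! t) (us ! Suc t) \<and> (\<exists>w\<in>X. lt z w \<and> \<theta> (z, w) = (us ! t, us ! Suc t))}"
    using t w L R E by auto
qed

lemma anti_sm:
  assumes nb: "\<forall>w\<in>X. \<not> lt w z"
  shows "{t. Suc t < length us \<and> lt (us ! Suc t) (us ! t) \<and> (\<exists>w\<in>X. lt z w \<and> \<theta> (z, w) = (us ! Suc t, us ! t))}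
       = {t. Suc t < length us \<and> us ! t = f z}"
proof (intro equalityI subsetI)
  fix t assume "t \<in> {t. Suc t < length us \<and> lt (us ! Suc t) (us ! t) \<and> (\<exists>w\<in>X. lt z w \<and> \<theta> (z, w) = (us ! Suc t, us ! t))}"
  then show "t \<in> {t. Suc t < length us \<and> us ! t = f z}" using th'' zX by auto
next
  fix t assume "t \<in> {t. Suc t < length us \<and> us ! t = f z}"
  then have t: "Suc t < length us" "us ! t = f z" by auto
  note s = walk_step[OF walk t(1)]
  obtain w where w: "w \<in> X" "f w = us ! Suc t" using anti_pre[OF aut] s by blast
  have "\<not> lt (us ! t) (us ! Suc t)" using nb flt'[OF w(1) zX] flt'[OF zX w(1)] w zX t(2) by auto
  then have R: "lt (us ! Suc t) (us ! t)" using s by blast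
  then have L: "lt z w" using flt'[OF w(1) zX] flt'[OF zX w(1)] w zX t(2) by auto
  have E: "\<theta> (z, w) = (f w, f z)" using th''[OF zX w(1) L] .
  show "t \<in> {t. Suc t < length us \<and> lt (us ! Suc t) (us ! t) \<and> (\<exists>w\<in>X. lt z w \<and> \<theta> (z, w) = (us ! Suc t, us ! t))}"
    using t w L R E by auto
qed

lemma anti_tp:
  assumes na: "\<forall>w\<in>X. \<not> lt z w"
  shows "{t. Suc t < length us \<and> lt (us ! t) (us ! Suc t) \<and> (\<exists>w\<in>X. lt w z \<and> \<theta> (w, z) = (us ! t, us ! Suc t))}
       = {t. Suc t < length us \<and> us ! t = f z}"
proof (intro equalityI subsetI)
  fix t assume "t \<in> {t. Suc t < length us \<and> lt (us ! t) (us ! Suc t) \<and> (\<exists>w\<in>X. lt w z \<and> \<theta> (w, z) = (us ! t, us ! Suc t))}"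
  then show "t \<in> {t. Suc t < length us \<and> us ! t = f z}" using th'' zX by auto
next
  fix t assume "t \<in> {t. Suc t < length us \<and> us ! t = f z}"
  then have t: "Suc t < length us" "us ! t = f z" by auto
  note s = walk_step[OF walk t(1)]
  obtain w where w: "w \<in> X" "f w = us ! Suc t" using anti_pre[OF aut] s by blast
  have "\<not> lt (us ! Suc t) (us ! t)" using na flt'[OF w(1) zX] flt'[OF zX w(1)] w zX t(2) by auto
  then have R: "lt (us ! t) (us ! Suc t)" using s by blast
  then have L: "lt w z" using flt'[OF w(1) zX] flt'[OF zX w(1)] w zX t(2) by auto
  have E: "\<theta> (w, z) = (f z, f w)" using th''[OF w(1) zX L] .
  show "t \<in> {t. Suc t < length us \<and> lt (us ! t) (us ! Suc t) \<and> (\<exists>w\<in>X. lt w z \<and> \<theta> (w, z) = (us ! t, us ! Suc t))}"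
    using t w L R E by auto
qed

lemma anti_tm:
  assumes na: "\<forall>w\<in>X. \<not> lt z w"
  shows "{t. Suc t < length us \<and> lt (us ! Suc t) (us ! t) \<and> (\<exists>w\<in>X. lt w z \<and> \<theta> (w, z) = (us ! Suc t, us ! t))}
       = {t. Suc t < length us \<and> us ! Suc t = f z}"
proof (intro equalityI subsetI)
  fix t assume "t \<in> {t. Suc t < length us \<and> lt (us ! Suc t) (us ! t) \<and> (\<exists>w\<in>X. lt w z \<and> \<theta> (w, z) = (us ! Suc t, us ! t))}"
  then show "t \<in> {t. Suc t < length us \<and> us ! Suc t = f z}" using th'' zX by auto
next
  fix t assume "t \<in> {t. Suc t < length us \<and> us ! Suc t = f z}"
  then have t: "Suc t < length us" "us ! Suc t = f z" by auto
  note s = walk_step[OF walk t(1)]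
  obtain w where w: "w \<in> X" "f w = us ! t" using anti_pre[OF aut] s by blast
  have "\<not> lt (us ! t) (us ! Suc t)" using na flt'[OF w(1) zX] flt'[OF zX w(1)] w zX t(2) by auto
  then have R: "lt (us ! Suc t) (us ! t)" using s by blast
  then have L: "lt w z" using flt'[OF w(1) zX] flt'[OF zX w(1)] w zX t(2) by auto
  have E: "\<theta> (w, z) = (f z, f w)" using th''[OF w(1) zX L] .
  show "t \<in> {t. Suc t < length us \<and> lt (us ! Suc t) (us ! t) \<and> (\<exists>w\<in>X. lt w z \<and> \<theta> (w, z) = (us ! Suc t, us ! t))}"
    using t w L R E by auto
qed

end
end



lemma P_adm:
  assumes P: "in_P (K_set m n) (K_lt m n) \<theta>"
  shows "admissible (K_set m n) (K_lt m n) \<theta>"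
  unfolding admissible_def
proof (intro allI impI)
  fix us z assume a: "closed_walk (K_set m n) (K_lt m n) us \<and> z \<in> K_set m n"
  then have walk: "is_walk (K_set m n) (K_lt m n) us" and zX: "z \<in> K_set m n"
    and ne: "us \<noteq> []" and hl: "hd us = last us"
    by (auto simp: closed_walk_def is_walk_def)
  have wc: "\<And>v. card {t. Suc t < length us \<and> us ! t = v} = card {t. Suc t < length us \<and> us ! Suc t = v}"
    using walk_count[OF ne hl] .
  show "int (s_plus (K_set m n) (K_lt m n) \<theta> us z) - int (s_minus (K_set m n) (K_lt m n) \<theta> us z) =
        int (t_plus (K_set m n) (K_lt m n) \<theta> us z) - int (t_minus (K_set m n) (K_lt m n) \<theta> us z)"
  proof (cases z)
    case (Inl x)
    have nb: "\<forall>w\<in>K_set m n. \<not> K_lt m n w z" using Inl by (simp add: K_lt_def)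
    have tp: "t_plus (K_set m n) (K_lt m n) \<theta> us z = 0" "t_minus (K_set m n) (K_lt m n) \<theta> us z = 0"
      unfolding t_plus_def t_minus_def using nb by auto
    from P consider (au) f where "is_automorphism (K_set m n) (K_lt m n) f"
        "\<forall>(x, y)\<in>basis (K_set m n) (K_lt m n). \<theta> (x, y) = (f x, f y)"
      | (an) f where "is_antiautomorphism (K_set m n) (K_lt m n) f"
        "\<forall>(x, y)\<in>basis (K_set m n) (K_lt m n). \<theta> (x, y) = (f y, f x)"
      unfolding in_P_def by blast
    then show ?thesis
    proof cases
      case au
      show ?thesis unfolding tp s_plus_def s_minus_def
        aut_sp[OF walk zX au nb] aut_sm[OF walk zX au nb] wc by simp
    next
      case an
      show ?thesis unfolding tp s_plus_def s_minus_def
        anti_sp[OF walk zX an nb] anti_sm[OF walk zX an nb] wc by simp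
    qed
  next
    case (Inr x)
    have na: "\<forall>w\<in>K_set m n. \<not> K_lt m n z w" using Inr by (simp add: K_lt_def)
    have sp: "s_plus (K_set m n) (K_lt m n) \<theta> us z = 0" "s_minus (K_set m n) (K_lt m n) \<theta> us z = 0"
      unfolding s_plus_def s_minus_def using na by auto
    from P consider (au) f where "is_automorphism (K_set m n) (K_lt m n) f"
        "\<forall>(x, y)\<in>basis (K_set m n) (K_lt m n). \<theta> (x, y) = (f x, f y)"
      | (an) f where "is_antiautomorphism (K_set m n) (K_lt m n) f"
        "\<forall>(x, y)\<in>basis (K_set m n) (K_lt m n). \<theta> (x, y) = (f y, f x)"
      unfolding in_P_def by blast
    then show ?thesis
    proof cases
      case au
      show ?thesis unfolding sp t_plus_def t_minus_def
        aut_tp[OF walk zX au na] aut_tm[OF walk zX au na] wc by simp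
    next
      case an
      show ?thesis unfolding sp t_plus_def t_minus_def
        anti_tp[OF walk zX an na] anti_tm[OF walk zX an na] wc by simp
    qed
  qed
qed



definition MM where "MM m n \<theta> a c d \<longleftrightarrow> (\<exists>w\<in>K_set m n. K_lt m n (Inl a) w \<and> \<theta> (Inl a, w) = (Inl c, Inr d))"
definition NN where "NN m n \<theta> b c d \<longleftrightarrow> (\<exists>w\<in>K_set m n. K_lt m n w (Inr b) \<and> \<theta> (w, Inr b) = (Inl c, Inr d))"

definition RT :: "nat \<Rightarrow> nat \<Rightarrow> (nat \<Rightarrow> nat \<Rightarrow> bool) \<Rightarrow> bool" where
  "RT m n P \<longleftrightarrow> (\<exists>R. \<forall>c<m. \<forall>d<n. P c d \<longleftrightarrow> c \<in> R)"
definition CT :: "nat \<Rightarrow> nat \<Rightarrow> (nat \<Rightarrow> nat \<Rightarrow> bool) \<Rightarrow> bool" where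
  "CT m n P \<longleftrightarrow> (\<exists>C. \<forall>c<m. \<forall>d<n. P c d \<longleftrightarrow> d \<in> C)"

lemma rowcol:
  assumes "0 < m" "0 < n"
    and eq: "\<And>i k j l. i < m \<Longrightarrow> k < m \<Longrightarrow> j < n \<Longrightarrow> l < n \<Longrightarrow>
      (if P i j then 1 else 0) + (if P k l then 1 else 0) = (if P k j then 1 else 0) + (if P i l then (1::nat) else 0)"
  shows "RT m n P \<or> CT m n P"
proof (cases "\<exists>i<m. \<exists>k<m. \<exists>j<n. P i j \<and> \<not> P k j")
  case True
  then obtain i k j where ikj: "i < m" "k < m" "j < n" "P i j" "\<not> P k j" by blast
  have "\<forall>c<m. \<forall>d<n. P c d \<longleftrightarrow> c \<in> {r. P r 0}"
  proof (intro allI impI)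
    fix c d assume cd: "c < m" "d < n"
    have "P i d" using eq[OF ikj(1,2,3) cd(2)] ikj by (auto split: if_splits)
    moreover have "(if P c 0 then 1 else 0) + (if P i d then 1 else 0) = (if P i 0 then 1 else 0) + (if P c d then (1::nat) else 0)"
      using eq[OF cd(1) ikj(1) assms(2) cd(2)] .
    moreover have "P i 0" using eq[OF ikj(1,2,3) assms(2)] ikj by (auto split: if_splits)
    ultimately show "P c d \<longleftrightarrow> c \<in> {r. P r 0}" by (auto split: if_splits)
  qed
  then show ?thesis unfolding RT_def by blast
next
  case False
  then have "\<forall>c<m. \<forall>d<n. P c d \<longleftrightarrow> d \<in> {d. P 0 d}" using assms(1) by blast
  then show ?thesis unfolding CT_def by blast
qed

lemma cycle_walk:
  assumes "i < m" "k < m" "j < n" "l < n"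
  shows "closed_walk (K_set m n) (K_lt m n) [Inl i, Inr j, Inl k, Inr l, Inl i]"
  unfolding closed_walk_def is_walk_def covers_K
proof (intro conjI allI impI)
  show "set [Inl i, Inr j, Inl k, Inr l, Inl i] \<subseteq> K_set m n" using assms by (auto simp: K_set_def)
  fix t assume "Suc t < length [Inl i, Inr j, Inl k, Inr l, Inl i :: nat + nat]"
  then have "t = 0 \<or> t = 1 \<or> t = 2 \<or> t = 3" by auto
  then show "K_lt m n ([Inl i, Inr j, Inl k, Inr l, Inl i] ! t) ([Inl i, Inr j, Inl k, Inr l, Inl i] ! Suc t) \<or>
         K_lt m n ([Inl i, Inr j, Inl k, Inr l, Inl i] ! Suc t) ([Inl i, Inr j, Inl k, Inr l, Inl i] ! t)"
    using assms by (auto simp: K_lt_def numeral_2_eq_2 numeral_3_eq_3)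
qed simp_all

lemma adm_M:
  assumes adm: "admissible (K_set m n) (K_lt m n) \<theta>" and a: "a < m"
    and ijkl: "i < m" "k < m" "j < n" "l < n"
  shows "(if MM m n \<theta> a i j then 1 else 0) + (if MM m n \<theta> a k l then 1 else 0) =
         (if MM m n \<theta> a k j then 1 else 0) + (if MM m n \<theta> a i l then (1::nat) else 0)"
proof -
  let ?W = "[Inl i, Inr j, Inl k, Inr l, Inl i] :: (nat + nat) list"
  have za: "Inl a \<in> K_set m n" using a by (auto simp: K_set_def)
  have e: "int (s_plus (K_set m n) (K_lt m n) \<theta> ?W (Inl a)) - int (s_minus (K_set m n) (K_lt m n) \<theta> ?W (Inl a)) =
        int (t_plus (K_set m n) (K_lt m n) \<theta> ?W (Inl a)) - int (t_minus (K_set m n) (K_lt m n) \<theta> ?W (Inl a))"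
    using adm cycle_walk[OF ijkl] za unfolding admissible_def by blast
  have t0: "t_plus (K_set m n) (K_lt m n) \<theta> ?W (Inl a) = 0" "t_minus (K_set m n) (K_lt m n) \<theta> ?W (Inl a) = 0"
    unfolding t_plus_def t_minus_def by (auto simp: K_lt_def)
  have sp: "s_plus (K_set m n) (K_lt m n) \<theta> ?W (Inl a) = (if MM m n \<theta> a i j then 1 else 0) + (if MM m n \<theta> a k l then 1 else 0)"
    unfolding s_plus_def card_walk5 MM_def using ijkl by (simp add: K_lt_def)
  have sm: "s_minus (K_set m n) (K_lt m n) \<theta> ?W (Inl a) = (if MM m n \<theta> a k j then 1 else 0) + (if MM m n \<theta> a i l then 1 else 0)"
    unfolding s_minus_def card_walk5 MM_def using ijkl by (simp add: K_lt_def)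
  show ?thesis using e t0 sp sm by simp
qed

lemma adm_N:
  assumes adm: "admissible (K_set m n) (K_lt m n) \<theta>" and b: "b < n"
    and ijkl: "i < m" "k < m" "j < n" "l < n"
  shows "(if NN m n \<theta> b i j then 1 else 0) + (if NN m n \<theta> b k l then 1 else 0) =
         (if NN m n \<theta> b k j then 1 else 0) + (if NN m n \<theta> b i l then (1::nat) else 0)"
proof -
  let ?W = "[Inl i, Inr j, Inl k, Inr l, Inl i] :: (nat + nat) list"
  have za: "Inr b \<in> K_set m n" using b by (auto simp: K_set_def)
  have e: "int (s_plus (K_set m n) (K_lt m n) \<theta> ?W (Inr b)) - int (s_minus (K_set m n) (K_lt m n) \<theta> ?W (Inr b)) =
        int (t_plus (K_set m n) (K_lt m n) \<theta> ?W (Inr b)) - int (t_minus (K_set m n) (K_lt m n) \<theta> ?W (Inr b))"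
    using adm cycle_walk[OF ijkl] za unfolding admissible_def by blast
  have s0: "s_plus (K_set m n) (K_lt m n) \<theta> ?W (Inr b) = 0" "s_minus (K_set m n) (K_lt m n) \<theta> ?W (Inr b) = 0"
    unfolding s_plus_def s_minus_def by (auto simp: K_lt_def)
  have tp: "t_plus (K_set m n) (K_lt m n) \<theta> ?W (Inr b) = (if NN m n \<theta> b i j then 1 else 0) + (if NN m n \<theta> b k l then 1 else 0)"
    unfolding t_plus_def card_walk5 NN_def using ijkl by (simp add: K_lt_def)
  have tm: "t_minus (K_set m n) (K_lt m n) \<theta> ?W (Inr b) = (if NN m n \<theta> b k j then 1 else 0) + (if NN m n \<theta> b i l then 1 else 0)"
    unfolding t_minus_def card_walk5 NN_def using ijkl by (simp add: K_lt_def)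
  show ?thesis using e s0 tp tm by simp
qed



context
  fixes m n :: nat and \<theta> :: "(nat + nat) \<times> (nat + nat) \<Rightarrow> (nat + nat) \<times> (nat + nat)"
  assumes m2: "2 \<le> m" and n2: "2 \<le> n"
    and bij: "bij_betw \<theta> (basis (K_set m n) (K_lt m n)) (basis (K_set m n) (K_lt m n))"
    and adm: "admissible (K_set m n) (K_lt m n) \<theta>"
begin

lemma inB: "(Inl a, Inr b) \<in> basis (K_set m n) (K_lt m n) \<longleftrightarrow> a < m \<and> b < n"
  by (simp add: basis_K K_lt_def)

lemma img: assumes "a < m" "b < n"
  obtains c d where "c < m" "d < n" "\<theta> (Inl a, Inr b) = (Inl c, Inr d)"
proof -
  have "(Inl a, Inr b) \<in> basis (K_set m n) (K_lt m n)" using inB assms by simp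
  then have "\<theta> (Inl a, Inr b) \<in> basis (K_set m n) (K_lt m n)"
    using bij_betwE[OF bij] by blast
  then show thesis using that by (cases "\<theta> (Inl a, Inr b)") (auto simp: basis_K K_lt_def)
qed

lemma MN_of: "a < m \<Longrightarrow> b < n \<Longrightarrow> \<theta> (Inl a, Inr b) = (Inl c, Inr d) \<Longrightarrow> MM m n \<theta> a c d \<and> NN m n \<theta> b c d"
proof -
  assume h: "a < m" "b < n" "\<theta> (Inl a, Inr b) = (Inl c, Inr d)"
  have "Inr b \<in> K_set m n" "Inl a \<in> K_set m n" "K_lt m n (Inl a) (Inr b)" using h by (auto simp: K_set_def K_lt_def)
  then show ?thesis unfolding MM_def NN_def using h(3) by blast
qed

lemma inter:
  assumes "a < m" "b < n" "MM m n \<theta> a c d" "NN m n \<theta> b c d"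
  shows "\<theta> (Inl a, Inr b) = (Inl c, Inr d)"
proof -
  obtain j where j: "j < n" "\<theta> (Inl a, Inr j) = (Inl c, Inr d)" using assms(3) unfolding MM_def by (auto simp: K_lt_def)
  obtain i where i: "i < m" "\<theta> (Inl i, Inr b) = (Inl c, Inr d)" using assms(4) unfolding NN_def by (auto simp: K_lt_def)
  have inj: "inj_on \<theta> (basis (K_set m n) (K_lt m n))" using bij bij_betw_def by blast
  have in1: "(Inl a, Inr j) \<in> basis (K_set m n) (K_lt m n)" and in2: "(Inl i, Inr b) \<in> basis (K_set m n) (K_lt m n)"
    using inB assms i j by simp_all
  have eq: "\<theta> (Inl a, Inr j) = \<theta> (Inl i, Inr b)" using i j by simp
  have "((Inl a, Inr j) :: (nat + nat) \<times> (nat + nat)) = (Inl i, Inr b)" using inj_onD[OF inj eq in1 in2] .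
  then show ?thesis using j by simp
qed

lemma surj: assumes "c < m" "d < n"
  obtains a b where "a < m" "b < n" "\<theta> (Inl a, Inr b) = (Inl c, Inr d)"
proof -
  have "(Inl c, Inr d) \<in> basis (K_set m n) (K_lt m n)" using inB assms by simp
  then have "(Inl c, Inr d) \<in> \<theta> ` basis (K_set m n) (K_lt m n)" using bij unfolding bij_betw_def by simp
  then obtain p where p: "p \<in> basis (K_set m n) (K_lt m n)" "\<theta> p = (Inl c, Inr d)" by (rule imageE) simp
  then obtain a b where "p = (Inl a, Inr b)" "a < m" "b < n" by (cases p) (auto simp: basis_K K_lt_def)
  then show thesis using that p by blast
qed

lemma inj2: assumes "a < m" "b < n" "a' < m" "b' < n" "\<theta> (Inl a, Inr b) = \<theta> (Inl a', Inr b')"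
  shows "a = a'" "b = b'"
proof -
  have inj: "inj_on \<theta> (basis (K_set m n) (K_lt m n))" using bij bij_betw_def by blast
  have in1: "(Inl a, Inr b) \<in> basis (K_set m n) (K_lt m n)" and in2: "(Inl a', Inr b') \<in> basis (K_set m n) (K_lt m n)"
    using inB assms by simp_all
  have "((Inl a, Inr b) :: (nat + nat) \<times> (nat + nat)) = (Inl a', Inr b')" using inj_onD[OF inj assms(5) in1 in2] .
  then show "a = a'" "b = b'" by auto
qed

lemma rowrow: assumes "a < m" "b < n" "RT m n (MM m n \<theta> a)" "RT m n (NN m n \<theta> b)" shows False
proof -
  obtain c d where cd: "c < m" "d < n" "\<theta> (Inl a, Inr b) = (Inl c, Inr d)" using img[OF assms(1,2)] by blast
  obtain R where R: "\<forall>c<m. \<forall>d<n. MM m n \<theta> a c d \<longleftrightarrow> c \<in> R" using assms(3) unfolding RT_def by blast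
  obtain R' where R': "\<forall>c<m. \<forall>d<n. NN m n \<theta> b c d \<longleftrightarrow> c \<in> R'" using assms(4) unfolding RT_def by blast
  define d' where "d' = (if d = 0 then 1 else 0::nat)"
  have d': "d' < n" "d' \<noteq> d" using n2 d'_def by auto
  have mn: "MM m n \<theta> a c d" "NN m n \<theta> b c d" using MN_of[OF assms(1,2) cd(3)] by auto
  have "c \<in> R" using R[rule_format, OF cd(1) cd(2)] mn(1) by simp
  then have h1: "MM m n \<theta> a c d'" using R[rule_format, OF cd(1) d'(1)] by simp
  have "c \<in> R'" using R'[rule_format, OF cd(1) cd(2)] mn(2) by simp
  then have h2: "NN m n \<theta> b c d'" using R'[rule_format, OF cd(1) d'(1)] by simp
  note h1 h2
  then have "\<theta> (Inl a, Inr b) = (Inl c, Inr d')" using inter[OF assms(1,2)] by blast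
  then show False using cd d' by simp
qed

lemma colcol: assumes "a < m" "b < n" "CT m n (MM m n \<theta> a)" "CT m n (NN m n \<theta> b)" shows False
proof -
  obtain c d where cd: "c < m" "d < n" "\<theta> (Inl a, Inr b) = (Inl c, Inr d)" using img[OF assms(1,2)] by blast
  obtain R where R: "\<forall>c<m. \<forall>d<n. MM m n \<theta> a c d \<longleftrightarrow> d \<in> R" using assms(3) unfolding CT_def by blast
  obtain R' where R': "\<forall>c<m. \<forall>d<n. NN m n \<theta> b c d \<longleftrightarrow> d \<in> R'" using assms(4) unfolding CT_def by blast
  define c' where "c' = (if c = 0 then 1 else 0::nat)"
  have c': "c' < m" "c' \<noteq> c" using m2 c'_def by auto
  have mn: "MM m n \<theta> a c d" "NN m n \<theta> b c d" using MN_of[OF assms(1,2) cd(3)] by auto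
  have "d \<in> R" using R[rule_format, OF cd(1) cd(2)] mn(1) by simp
  then have h1: "MM m n \<theta> a c' d" using R[rule_format, OF c'(1) cd(2)] by simp
  have "d \<in> R'" using R'[rule_format, OF cd(1) cd(2)] mn(2) by simp
  then have h2: "NN m n \<theta> b c' d" using R'[rule_format, OF c'(1) cd(2)] by simp
  note h1 h2
  then have "\<theta> (Inl a, Inr b) = (Inl c', Inr d)" using inter[OF assms(1,2)] by blast
  then show False using cd c' by simp
qed

lemma RC_M: "a < m \<Longrightarrow> RT m n (MM m n \<theta> a) \<or> CT m n (MM m n \<theta> a)"
proof -
  assume v: "a < m"
  show ?thesis
  proof (rule rowcol)
    show "0 < m" "0 < n" using m2 n2 by simp_all
    fix i k j l assume "i < m" "k < m" "j < n" "l < n"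
    then show "(if MM m n \<theta> a i j then 1 else 0) + (if MM m n \<theta> a k l then 1 else 0) =
         (if MM m n \<theta> a k j then 1 else 0) + (if MM m n \<theta> a i l then (1::nat) else 0)"
      by (rule adm_M[OF adm v])
  qed
qed

lemma RC_N: "b < n \<Longrightarrow> RT m n (NN m n \<theta> b) \<or> CT m n (NN m n \<theta> b)"
proof -
  assume v: "b < n"
  show ?thesis
  proof (rule rowcol)
    show "0 < m" "0 < n" using m2 n2 by simp_all
    fix i k j l assume "i < m" "k < m" "j < n" "l < n"
    then show "(if NN m n \<theta> b i j then 1 else 0) + (if NN m n \<theta> b k l then 1 else 0) =
         (if NN m n \<theta> b k j then 1 else 0) + (if NN m n \<theta> b i l then (1::nat) else 0)"
      by (rule adm_N[OF adm v])
  qed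
qed


lemma Kmem: "Inl a \<in> K_set m n \<longleftrightarrow> a < m" "Inr b \<in> K_set m n \<longleftrightarrow> b < n"
  by (auto simp: K_set_def)

lemma Bmem: "p \<in> basis (K_set m n) (K_lt m n) \<Longrightarrow> \<exists>a b. a < m \<and> b < n \<and> p = (Inl a, Inr b)"
  by (cases p) (auto simp: basis_K K_lt_def)

lemma case1:
  assumes c0: "CT m n (NN m n \<theta> 0)"
  shows "in_P (K_set m n) (K_lt m n) \<theta>"
proof -
  have m0: "0 < m" and n0: "0 < n" using m2 n2 by auto
  have hM: "RT m n (MM m n \<theta> a)" if a: "a < m" for a
    using RC_M[OF a] colcol[OF a n0 _ c0] by blast
  have hN: "CT m n (NN m n \<theta> b)" if b: "b < n" for b
    using RC_N[OF b] rowrow[OF m0 b hM[OF m0]] by blast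
  define \<sigma> where "\<sigma> a = projl (fst (\<theta> (Inl a, Inr 0)))" for a
  define \<tau> where "\<tau> b = projr (snd (\<theta> (Inl 0, Inr b)))" for b
  have claim: "\<theta> (Inl a, Inr b) = (Inl (\<sigma> a), Inr (\<tau> b)) \<and> \<sigma> a < m \<and> \<tau> b < n" if ab: "a < m" "b < n" for a b
  proof -
    obtain c d where cd: "c < m" "d < n" "\<theta> (Inl a, Inr b) = (Inl c, Inr d)" using img[OF ab] by blast
    obtain c0 d0 where cd0: "c0 < m" "d0 < n" "\<theta> (Inl a, Inr 0) = (Inl c0, Inr d0)" using img[OF ab(1) n0] by blast
    obtain c1 d1 where cd1: "c1 < m" "d1 < n" "\<theta> (Inl 0, Inr b) = (Inl c1, Inr d1)" using img[OF m0 ab(2)] by blast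
    have s: "\<sigma> a = c0" by (simp add: \<sigma>_def cd0)
    have t: "\<tau> b = d1" by (simp add: \<tau>_def cd1)
    have M1: "MM m n \<theta> a c d" and N1: "NN m n \<theta> b c d" using MN_of[OF ab cd(3)] by auto
    have M0: "MM m n \<theta> a c0 d0" using MN_of[OF ab(1) n0 cd0(3)] by auto
    have N2: "NN m n \<theta> b c1 d1" using MN_of[OF m0 ab(2) cd1(3)] by auto
    obtain R where R: "\<forall>c<m. \<forall>d<n. MM m n \<theta> a c d \<longleftrightarrow> c \<in> R" using hM[OF ab(1)] unfolding RT_def by blast
    obtain C where C: "\<forall>c<m. \<forall>d<n. NN m n \<theta> b c d \<longleftrightarrow> d \<in> C" using hN[OF ab(2)] unfolding CT_def by blast
    have "c \<in> R" using R[rule_format, OF cd(1,2)] M1 by simp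
    have "c0 \<in> R" using R[rule_format, OF cd0(1,2)] M0 by simp
    have "d \<in> C" using C[rule_format, OF cd(1,2)] N1 by simp
    have "d1 \<in> C" using C[rule_format, OF cd1(1,2)] N2 by simp
    have "MM m n \<theta> a c0 d" using R[rule_format, OF cd0(1) cd(2)] \<open>c0 \<in> R\<close> by simp
    moreover have "NN m n \<theta> b c0 d" using C[rule_format, OF cd0(1) cd(2)] \<open>d \<in> C\<close> by simp
    ultimately have "\<theta> (Inl a, Inr b) = (Inl c0, Inr d)" using inter[OF ab] by blast
    then have cc: "c = c0" using cd by simp
    have "MM m n \<theta> a c d1" using R[rule_format, OF cd(1) cd1(2)] \<open>c \<in> R\<close> by simp
    moreover have "NN m n \<theta> b c d1" using C[rule_format, OF cd(1) cd1(2)] \<open>d1 \<in> C\<close> by simp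
    ultimately have "\<theta> (Inl a, Inr b) = (Inl c, Inr d1)" using inter[OF ab] by blast
    then have dd: "d = d1" using cd by simp
    show ?thesis using cd cc dd s t cd0 cd1 by simp
  qed
  define f :: "nat + nat \<Rightarrow> nat + nat" where "f = case_sum (\<lambda>i. Inl (\<sigma> i)) (\<lambda>j. Inr (\<tau> j))"
  have inj: "inj_on f (K_set m n)"
  proof (rule inj_onI)
    fix x y assume xy: "x \<in> K_set m n" "y \<in> K_set m n" "f x = f y"
    show "x = y"
    proof (cases x; cases y)
      fix a a' assume "x = Inl a" "y = Inl a'"
      then have a: "a < m" "a' < m" "\<sigma> a = \<sigma> a'" using xy by (auto simp: Kmem f_def)
      then have "\<theta> (Inl a, Inr 0) = \<theta> (Inl a', Inr 0)" using claim[OF a(1) n0] claim[OF a(2) n0] by simp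
      then show "x = y" using inj2[OF a(1) n0 a(2) n0] \<open>x = Inl a\<close> \<open>y = Inl a'\<close> by simp
    next
      fix b b' assume "x = Inr b" "y = Inr b'"
      then have b: "b < n" "b' < n" "\<tau> b = \<tau> b'" using xy by (auto simp: Kmem f_def)
      then have "\<theta> (Inl 0, Inr b) = \<theta> (Inl 0, Inr b')" using claim[OF m0 b(1)] claim[OF m0 b(2)] by simp
      then show "x = y" using inj2[OF m0 b(1) m0 b(2)] \<open>x = Inr b\<close> \<open>y = Inr b'\<close> by simp
    qed (use xy in \<open>auto simp: f_def\<close>)
  qed
  have img_f: "f ` K_set m n = K_set m n"
  proof (intro equalityI subsetI)
    fix y assume "y \<in> f ` K_set m n"
    then obtain x where x: "x \<in> K_set m n" "y = f x" by blast
    show "y \<in> K_set m n"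
    proof (cases x)
      case (Inl a) then show ?thesis using x claim[OF _ n0, of a] by (auto simp: Kmem f_def)
    next
      case (Inr b) then show ?thesis using x claim[OF m0, of b] by (auto simp: Kmem f_def)
    qed
  next
    fix y assume y: "y \<in> K_set m n"
    show "y \<in> f ` K_set m n"
    proof (cases y)
      case (Inl c)
      then have "c < m" using y Kmem by simp
      then obtain a b where ab: "a < m" "b < n" "\<theta> (Inl a, Inr b) = (Inl c, Inr 0)" using surj[OF _ n0] by blast
      then have "c = \<sigma> a" using claim[OF ab(1,2)] by simp
      then have "y = f (Inl a)" using Inl by (simp add: f_def)
      then show ?thesis using ab(1) Kmem by blast
    next
      case (Inr d)
      then have "d < n" using y Kmem by simp
      then obtain a b where ab: "a < m" "b < n" "\<theta> (Inl a, Inr b) = (Inl 0, Inr d)" using surj[OF m0] by blast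
      then have "d = \<tau> b" using claim[OF ab(1,2)] by simp
      then have "y = f (Inr b)" using Inr by (simp add: f_def)
      then show ?thesis using ab(2) Kmem by blast
    qed
  qed
  have ltf: "K_lt m n x y \<longleftrightarrow> K_lt m n (f x) (f y)" if "x \<in> K_set m n" "y \<in> K_set m n" for x y
  proof (cases x; cases y)
    fix a b assume "x = Inl a" "y = Inr b"
    then show ?thesis using that claim[of a b] by (auto simp: Kmem f_def K_lt_def)
  qed (auto simp: f_def K_lt_def)
  have aut: "is_automorphism (K_set m n) (K_lt m n) f"
    unfolding is_automorphism_def bij_betw_def using inj img_f ltf by blast
  have agree: "\<forall>(x, y)\<in>basis (K_set m n) (K_lt m n). \<theta> (x, y) = (f x, f y)"
  proof (intro ballI)
    fix p assume "p \<in> basis (K_set m n) (K_lt m n)"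
    then obtain a b where ab: "a < m" "b < n" "p = (Inl a, Inr b)" using Bmem by blast
    then show "case p of (x, y) \<Rightarrow> \<theta> (x, y) = (f x, f y)" using claim[OF ab(1,2)] by (simp add: f_def)
  qed
  show ?thesis unfolding in_P_def using bij aut agree by blast
qed


lemma case2:
  assumes r0: "RT m n (NN m n \<theta> 0)"
  shows "in_P (K_set m n) (K_lt m n) \<theta>"
proof -
  have m0: "0 < m" and n0: "0 < n" using m2 n2 by auto
  have hM: "CT m n (MM m n \<theta> a)" if a: "a < m" for a
    using RC_M[OF a] rowrow[OF a n0 _ r0] by blast
  have hN: "RT m n (NN m n \<theta> b)" if b: "b < n" for b
    using RC_N[OF b] colcol[OF m0 b hM[OF m0]] by blast
  define \<sigma> where "\<sigma> a = projr (snd (\<theta> (Inl a, Inr 0)))" for a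
  define \<tau> where "\<tau> b = projl (fst (\<theta> (Inl 0, Inr b)))" for b
  have claim: "\<theta> (Inl a, Inr b) = (Inl (\<tau> b), Inr (\<sigma> a)) \<and> \<sigma> a < n \<and> \<tau> b < m" if ab: "a < m" "b < n" for a b
  proof -
    obtain c d where cd: "c < m" "d < n" "\<theta> (Inl a, Inr b) = (Inl c, Inr d)" using img[OF ab] by blast
    obtain c0 d0 where cd0: "c0 < m" "d0 < n" "\<theta> (Inl a, Inr 0) = (Inl c0, Inr d0)" using img[OF ab(1) n0] by blast
    obtain c1 d1 where cd1: "c1 < m" "d1 < n" "\<theta> (Inl 0, Inr b) = (Inl c1, Inr d1)" using img[OF m0 ab(2)] by blast
    have s: "\<sigma> a = d0" by (simp add: \<sigma>_def cd0)
    have t: "\<tau> b = c1" by (simp add: \<tau>_def cd1)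
    have M1: "MM m n \<theta> a c d" and N1: "NN m n \<theta> b c d" using MN_of[OF ab cd(3)] by auto
    have M0: "MM m n \<theta> a c0 d0" using MN_of[OF ab(1) n0 cd0(3)] by auto
    have N2: "NN m n \<theta> b c1 d1" using MN_of[OF m0 ab(2) cd1(3)] by auto
    obtain C where C: "\<forall>c<m. \<forall>d<n. MM m n \<theta> a c d \<longleftrightarrow> d \<in> C" using hM[OF ab(1)] unfolding CT_def by blast
    obtain R where R: "\<forall>c<m. \<forall>d<n. NN m n \<theta> b c d \<longleftrightarrow> c \<in> R" using hN[OF ab(2)] unfolding RT_def by blast
    have "d \<in> C" using C[rule_format, OF cd(1,2)] M1 by simp
    have "d0 \<in> C" using C[rule_format, OF cd0(1,2)] M0 by simp
    have "c \<in> R" using R[rule_format, OF cd(1,2)] N1 by simp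
    have "c1 \<in> R" using R[rule_format, OF cd1(1,2)] N2 by simp
    have "MM m n \<theta> a c d0" using C[rule_format, OF cd(1) cd0(2)] \<open>d0 \<in> C\<close> by simp
    moreover have "NN m n \<theta> b c d0" using R[rule_format, OF cd(1) cd0(2)] \<open>c \<in> R\<close> by simp
    ultimately have "\<theta> (Inl a, Inr b) = (Inl c, Inr d0)" using inter[OF ab] by blast
    then have dd: "d = d0" using cd by simp
    have "MM m n \<theta> a c1 d" using C[rule_format, OF cd1(1) cd(2)] \<open>d \<in> C\<close> by simp
    moreover have "NN m n \<theta> b c1 d" using R[rule_format, OF cd1(1) cd(2)] \<open>c1 \<in> R\<close> by simp
    ultimately have "\<theta> (Inl a, Inr b) = (Inl c1, Inr d)" using inter[OF ab] by blast
    then have cc: "c = c1" using cd by simp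
    show ?thesis using cd cc dd s t cd0 cd1 by simp
  qed
  define f :: "nat + nat \<Rightarrow> nat + nat" where "f = case_sum (\<lambda>i. Inr (\<sigma> i)) (\<lambda>j. Inl (\<tau> j))"
  have inj: "inj_on f (K_set m n)"
  proof (rule inj_onI)
    fix x y assume xy: "x \<in> K_set m n" "y \<in> K_set m n" "f x = f y"
    show "x = y"
    proof (cases x; cases y)
      fix a a' assume "x = Inl a" "y = Inl a'"
      then have a: "a < m" "a' < m" "\<sigma> a = \<sigma> a'" using xy by (auto simp: Kmem f_def)
      then have "\<theta> (Inl a, Inr 0) = \<theta> (Inl a', Inr 0)" using claim[OF a(1) n0] claim[OF a(2) n0] by simp
      then show "x = y" using inj2[OF a(1) n0 a(2) n0] \<open>x = Inl a\<close> \<open>y = Inl a'\<close> by simp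
    next
      fix b b' assume "x = Inr b" "y = Inr b'"
      then have b: "b < n" "b' < n" "\<tau> b = \<tau> b'" using xy by (auto simp: Kmem f_def)
      then have "\<theta> (Inl 0, Inr b) = \<theta> (Inl 0, Inr b')" using claim[OF m0 b(1)] claim[OF m0 b(2)] by simp
      then show "x = y" using inj2[OF m0 b(1) m0 b(2)] \<open>x = Inr b\<close> \<open>y = Inr b'\<close> by simp
    qed (use xy in \<open>auto simp: f_def\<close>)
  qed
  have img_f: "f ` K_set m n = K_set m n"
  proof (intro equalityI subsetI)
    fix y assume "y \<in> f ` K_set m n"
    then obtain x where x: "x \<in> K_set m n" "y = f x" by blast
    show "y \<in> K_set m n"
    proof (cases x)
      case (Inl a) then show ?thesis using x claim[OF _ n0, of a] by (auto simp: Kmem f_def)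
    next
      case (Inr b) then show ?thesis using x claim[OF m0, of b] by (auto simp: Kmem f_def)
    qed
  next
    fix y assume y: "y \<in> K_set m n"
    show "y \<in> f ` K_set m n"
    proof (cases y)
      case (Inl c)
      then have "c < m" using y Kmem by simp
      then obtain a b where ab: "a < m" "b < n" "\<theta> (Inl a, Inr b) = (Inl c, Inr 0)" using surj[OF _ n0] by blast
      then have "c = \<tau> b" using claim[OF ab(1,2)] by simp
      then have "y = f (Inr b)" using Inl by (simp add: f_def)
      then show ?thesis using ab(2) Kmem by blast
    next
      case (Inr d)
      then have "d < n" using y Kmem by simp
      then obtain a b where ab: "a < m" "b < n" "\<theta> (Inl a, Inr b) = (Inl 0, Inr d)" using surj[OF m0] by blast
      then have "d = \<sigma> a" using claim[OF ab(1,2)] by simp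
      then have "y = f (Inl a)" using Inr by (simp add: f_def)
      then show ?thesis using ab(1) Kmem by blast
    qed
  qed
  have ltf: "K_lt m n x y \<longleftrightarrow> K_lt m n (f y) (f x)" if "x \<in> K_set m n" "y \<in> K_set m n" for x y
  proof (cases x; cases y)
    fix a b assume "x = Inl a" "y = Inr b"
    then show ?thesis using that claim[of a b] by (auto simp: Kmem f_def K_lt_def)
  qed (auto simp: f_def K_lt_def)
  have aut: "is_antiautomorphism (K_set m n) (K_lt m n) f"
    unfolding is_antiautomorphism_def bij_betw_def using inj img_f ltf by blast
  have agree: "\<forall>(x, y)\<in>basis (K_set m n) (K_lt m n). \<theta> (x, y) = (f y, f x)"
  proof (intro ballI)
    fix p assume "p \<in> basis (K_set m n) (K_lt m n)"
    then obtain a b where ab: "a < m" "b < n" "p = (Inl a, Inr b)" using Bmem by blast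
    then show "case p of (x, y) \<Rightarrow> \<theta> (x, y) = (f y, f x)" using claim[OF ab(1,2)] by (simp add: f_def)
  qed
  show ?thesis unfolding in_P_def using bij aut agree by blast
qed

lemma AM_P: "in_P (K_set m n) (K_lt m n) \<theta>"
  using RC_N[of 0] n2 case1 case2 by fastforce

end


theorem proposition4p14:
  fixes m n :: nat
  assumes "2 \<le> m" and "m \<le> n"
  shows "{\<theta>. in_P (K_set m n) (K_lt m n) \<theta>} = {\<theta>. in_AM (K_set m n) (K_lt m n) \<theta>}"
proof (intro equalityI subsetI)
  have m0: "0 < m" and n0: "0 < n" and n2: "2 \<le> n" using assms by auto
  fix \<theta> assume "\<theta> \<in> {\<theta>. in_P (K_set m n) (K_lt m n) \<theta>}"
  then have P: "in_P (K_set m n) (K_lt m n) \<theta>" by simp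
  have "bij_betw \<theta> (basis (K_set m n) (K_lt m n)) (basis (K_set m n) (K_lt m n))"
    using P unfolding in_P_def by blast
  then show "\<theta> \<in> {\<theta>. in_AM (K_set m n) (K_lt m n) \<theta>}"
    using in_M_K[OF m0 n0] P_adm[OF P] unfolding in_AM_def by simp
next
  have n2: "2 \<le> n" using assms by auto
  fix \<theta> assume "\<theta> \<in> {\<theta>. in_AM (K_set m n) (K_lt m n) \<theta>}"
  then have bij: "bij_betw \<theta> (basis (K_set m n) (K_lt m n)) (basis (K_set m n) (K_lt m n))"
    and adm: "admissible (K_set m n) (K_lt m n) \<theta>"
    unfolding in_AM_def in_M_def by auto
  show "\<theta> \<in> {\<theta>. in_P (K_set m n) (K_lt m n) \<theta>}"
    using AM_P[OF assms(1) n2 bij adm] by simp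
qed

end
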